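(* Let $p$ be a random partition and let $\mathrm{Sh}^p$ be its $p$-Shapley value, $$\mathrm{Sh}^p_i(w)=\sum_{(T,\tau)\in\mathcal{E}(N\setminus\{i\})}\Big(p_N(\{T\cup\{i\}\}\cup\tau)\,w(T\cup\{i\},\tau)-\frac{t}{n-t}\sum_{B\in\tau\cup\{\emptyset\}}p_N(\{T\}\cup\tau_{+i\leadsto B})\,w(T,\tau_{+i\leadsto B})\Big)$$ for $N\subseteq\mathbf{U}$, $w\in\mathbb{W}(N)$, $i\in N$. Then $\mathrm{Sh}^p$ satisfies monotonicity if and only if $p=p^\star$, i.e., if and only if $\mathrm{Sh}^p=\mathrm{MPW}$.
   Context: $\mathbf{U}$ is a finite set of players; cardinalities of $N,S,T,B$ are $n,s,t,b$. $\Pi(N)$ is the set of partitions of $N$ ($\Pi(\emptyset)=\{\emptyset\}$). A random partition is $p=(p_N)_{N\subseteq\mathbf{U}}$ with $p_N$ a probability distribution on $\Pi(N)$; $p^\star$ is the Ewens distribution $p^\star_N(\pi)=\frac{\prod_{B\in\pi}(b-1)!}{n!}$. $\pi_{+i\leadsto B}=(\pi\setminus\{B\})\cup\{B\cup\{i\}\}$ for $B\in\pi$, $\pi_{+i\leadsto\emptyset}=\pi\cup\{\{i\}\}$. Embedded coalitions $\mathcal{E}(N)=\{(S,\pi):S\subseteq N,\pi\in\Pi(N\setminus S)\}$; a TUX game on $N$ is $w:\mathcal{E}(N)\to\mathbb{R}$ with $w(\emptyset,\pi)=0$; $\mathbb{W}(N)$ their set. A solution $\varphi$ (assigning $\varphi(w)\in\mathbb{R}^N$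 to each $w\in\mathbb{W}(N)$) satisfies monotonicity if for all $N$, $w,z\in\mathbb{W}(N)$ and $i\in N$ with $w(S\cup\{i\},\pi)-w(S,\pi_{+i\leadsto B})\ge z(S\cup\{i\},\pi)-z(S,\pi_{+i\leadsto B})$ for all $(S,\pi)\in\mathcal{E}(N\setminus\{i\})$ and $B\in\pi\cup\{\emptyset\}$, we have $\varphi_i(w)\ge\varphi_i(z)$. The Shapley value of a TU game $v$ is $\mathrm{Sh}_i(v)=\sum_{S\subseteq N\setminus\{i\}}\frac{s!(n-s-1)!}{n!}(v(S\cup\{i\})-v(S))$; the MPW solution is $\mathrm{MPW}(w)=\mathrm{Sh}(\bar v^\star_w)$ with $\bar v^\star_w(S)=\sum_{\pi\in\Pi(N\setminus S)}p^\star_{N\setminus S}(\pi)w(S,\pi)$. *)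

theory Defs
  imports Complex_Main "HOL-Library.Disjoint_Sets"
begin

text \<open>Partitions of N (Pi(N)); Pi({}) = {{}}.\<close>
definition partitions :: "'a set \<Rightarrow> 'a set set set" where
  "partitions N = {P. partition_on N P}"

definition emb :: "'a set \<Rightarrow> ('a set \<times> 'a set set) set" where
  "emb N = {(S, P). S \<subseteq> N \<and> P \<in> partitions (N - S)}"

text \<open>pi_{+i ~> B}; B = {} means adding the singleton {i}.\<close>
definition add_to :: "'a set set \<Rightarrow> 'a \<Rightarrow> 'a set \<Rightarrow> 'a set set" where
  "add_to P i B = (if B = {} then insert {i} P else insert (insert i B) (P - {B}))"

definition random_partition :: "'a set \<Rightarrow> ('a set \<Rightarrow> 'a set set \<Rightarrow> real) \<Rightarrow> bool" where
  "random_partition U p \<longleftrightarrow>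
     (\<forall>N. N \<subseteq> U \<longrightarrow> (\<forall>P\<in>partitions N. p N P \<ge> 0) \<and> (\<Sum>P\<in>partitions N. p N P) = 1)"

definition ewens :: "'a set \<Rightarrow> 'a set set \<Rightarrow> real" where
  "ewens N P = (\<Prod>B\<in>P. fact (card B - 1)) / fact (card N)"

definition same_rp :: "'a set \<Rightarrow> ('a set \<Rightarrow> 'a set set \<Rightarrow> real) \<Rightarrow> ('a set \<Rightarrow> 'a set set \<Rightarrow> real) \<Rightarrow> bool" where
  "same_rp U p q \<longleftrightarrow> (\<forall>N. N \<subseteq> U \<longrightarrow> (\<forall>P\<in>partitions N. p N P = q N P))"

text \<open>TUX games on N: w (S, pi) with w({}, pi) = 0. Values outside E(N) are irrelevant.\<close>
definition tux_game :: "'a set \<Rightarrow> ('a set \<Rightarrow> 'a set set \<Rightarrow> real) \<Rightarrow> bool" where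
  "tux_game N w \<longleftrightarrow> (\<forall>P\<in>partitions N. w {} P = 0)"

text \<open>A solution: phi N w i is the payoff of i in game w on N.\<close>
type_synonym 'a solution = "'a set \<Rightarrow> ('a set \<Rightarrow> 'a set set \<Rightarrow> real) \<Rightarrow> 'a \<Rightarrow> real"

definition monotonicity :: "'a set \<Rightarrow> 'a solution \<Rightarrow> bool" where
  "monotonicity U phi \<longleftrightarrow>
    (\<forall>N w z i. N \<subseteq> U \<longrightarrow> tux_game N w \<longrightarrow> tux_game N z \<longrightarrow> i \<in> N \<longrightarrow>
       (\<forall>(S, P)\<in>emb (N - {i}). \<forall>B\<in>insert {} P.
          w (insert i S) P - w S (add_to P i B) \<ge> z (insert i S) P - z S (add_to P i B)) \<longrightarrow>
       phi N w i \<ge> phi N z i)"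

definition same_solution :: "'a set \<Rightarrow> 'a solution \<Rightarrow> 'a solution \<Rightarrow> bool" where
  "same_solution U phi psi \<longleftrightarrow>
    (\<forall>N w i. N \<subseteq> U \<longrightarrow> tux_game N w \<longrightarrow> i \<in> N \<longrightarrow> phi N w i = psi N w i)"

definition p_shapley :: "('a set \<Rightarrow> 'a set set \<Rightarrow> real) \<Rightarrow> 'a solution" where
  "p_shapley p N w i =
    (\<Sum>(T, P)\<in>emb (N - {i}).
       p N (insert (insert i T) P) * w (insert i T) P
       - real (card T) / (real (card N) - real (card T)) *
         (\<Sum>B\<in>insert {} P. p N (insert T (add_to P i B)) * w T (add_to P i B)))"

definition shapley :: "'a set \<Rightarrow> ('a set \<Rightarrow> real) \<Rightarrow> 'a \<Rightarrow> real" where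
  "shapley N v i =
    (\<Sum>S\<in>Pow (N - {i}). fact (card S) * fact (card N - card S - 1) / fact (card N)
        * (v (insert i S) - v S))"

definition MPW :: "'a solution" where
  "MPW N w i = shapley N (\<lambda>S. \<Sum>P\<in>partitions (N - S). ewens (N - S) P * w S P) i"

end

theory Submission
  imports Defs
begin

definition rem_pt :: "'a set set \<Rightarrow> 'a \<Rightarrow> 'a set set" where
  "rem_pt Q i = (\<lambda>C. C - {i}) ` Q - {{}}"

definition blk :: "'a set set \<Rightarrow> 'a \<Rightarrow> 'a set" where
  "blk Q i = \<Union>{C\<in>Q. i\<in>C} - {i}"

lemma part_uniq:
  assumes "partition_on A Q" "C \<in> Q" "D \<in> Q" "x \<in> C" "x \<in> D"
  shows "C = D"
proof (rule ccontr)
  assume "C \<noteq> D"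
  then have "C \<inter> D = {}" using disjointD[OF partition_onD2[OF assms(1)] assms(2,3)] by simp
  then show False using assms(4,5) by blast
qed

lemma part_remove:
  assumes Q: "partition_on A Q" and C: "C \<in> Q"
  shows "partition_on (A - C) (Q - {C})" "disjnt C (\<Union>(Q - {C}))"
proof -
  show d: "disjnt C (\<Union>(Q - {C}))"
    unfolding disjnt_def using part_uniq[OF Q C] by blast
  have "partition_on A (insert C (Q - {C}))" using Q C by (simp add: insert_absorb)
  then show "partition_on (A - C) (Q - {C})" using partition_on_insert[OF d] by simp
qed

lemma add_to_part:
  assumes P: "partition_on A P" and i: "i \<notin> A" and B: "B \<in> insert {} P"
  shows "partition_on (insert i A) (add_to P i B)"
proof (cases "B = {}")
  case True
  have "partition_on (insert i A) (insert {i} P)"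
    using P i by (subst partition_on_insert) (auto simp: disjnt_def partition_on_def)
  then show ?thesis using True by (simp add: add_to_def)
next
  case False
  then have BP: "B \<in> P" using B by auto
  have "i \<notin> \<Union>(P - {B})" using partition_onD1[OF P] i by blast
  then have d: "disjnt (insert i B) (\<Union>(P - {B}))"
    using part_remove(2)[OF P BP] by (simp add: disjnt_def)
  have "partition_on (A - B) (P - {B})"
    using part_remove(1)[OF P BP] .
  moreover have "insert i A - insert i B = A - B" using i by auto
  moreover have "B \<subseteq> A" using P BP by (auto simp: partition_on_def)
  ultimately have "partition_on (insert i A) (insert (insert i B) (P - {B}))"
    using d by (subst partition_on_insert) auto
  then show ?thesis using False by (simp add: add_to_def)
qed

lemma rem_add:
  assumes P: "partition_on A P" and i: "i \<notin> A" and B: "B \<in> insert {} P"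
  shows "rem_pt (add_to P i B) i = P" "blk (add_to P i B) i = B"
proof -
  have iP: "\<And>C. C \<in> P \<Longrightarrow> i \<notin> C" using P i by (auto simp: partition_on_def)
  have ne: "{} \<notin> P" using P by (auto simp: partition_on_def)
  have iB: "i \<notin> B" using B iP by auto
  show "rem_pt (add_to P i B) i = P"
  proof (cases "B = {}")
    case True
    have "(\<lambda>C. C - {i}) ` P = P" using iP by (force simp: image_iff)
    then show ?thesis using True ne by (auto simp: rem_pt_def add_to_def)
  next
    case False
    then have BP: "B \<in> P" using B by auto
    have "(\<lambda>C. C - {i}) ` (insert (insert i B) (P - {B})) = insert B ((\<lambda>C. C - {i}) ` (P - {B}))"
      using iB by auto
    also have "(\<lambda>C. C - {i}) ` (P - {B}) = P - {B}" using iP by (force simp: image_iff)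
    finally show ?thesis using False BP ne by (auto simp: rem_pt_def add_to_def)
  qed
  show "blk (add_to P i B) i = B"
  proof (cases "B = {}")
    case True
    have "{C\<in>insert {i} P. i\<in>C} = {{i}}" using iP by auto
    then show ?thesis using True by (simp add: blk_def add_to_def)
  next
    case False
    have "{C\<in>insert (insert i B) (P - {B}). i\<in>C} = {insert i B}" using iP by auto
    then show ?thesis using False iB by (simp add: blk_def add_to_def)
  qed
qed

lemma rem_part:
  assumes Q: "partition_on (insert i A) Q" and i: "i \<notin> A"
  shows "partition_on A (rem_pt Q i)" "blk Q i \<in> insert {} (rem_pt Q i)"
    "add_to (rem_pt Q i) i (blk Q i) = Q"
proof -
  have "i \<in> \<Union>Q" by (subst partition_onD1[OF Q, symmetric]) simp
  then obtain C where C: "C \<in> Q" "i \<in> C" by blast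
  have uniq: "\<And>D. D \<in> Q \<Longrightarrow> i \<in> D \<Longrightarrow> D = C"
    using part_uniq[OF Q] C by blast
  have bl: "blk Q i = C - {i}"
  proof -
    have "{D\<in>Q. i\<in>D} = {C}" using uniq C by blast
    then show ?thesis by (simp add: blk_def)
  qed
  have oth: "\<And>D. D \<in> Q - {C} \<Longrightarrow> D - {i} = D" using uniq by blast
  have im: "(\<lambda>C. C - {i}) ` (Q - {C}) = Q - {C}" using oth by (force simp: image_iff)
  have ne: "{} \<notin> Q" using Q by (auto simp: partition_on_def)
  have rp: "rem_pt Q i = (Q - {C}) \<union> (if C - {i} = {} then {} else {C - {i}})"
  proof -
    have "Q = insert C (Q - {C})" using C by auto
    then have "(\<lambda>C. C - {i}) ` Q = insert (C - {i}) (Q - {C})" using im by (metis image_insert)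
    then show ?thesis using ne by (auto simp: rem_pt_def)
  qed
  have pQC: "partition_on (insert i A - C) (Q - {C})"
    using part_remove(1)[OF Q C(1)] .
  show "partition_on A (rem_pt Q i)"
  proof (cases "C - {i} = {}")
    case True
    then have "insert i A - C = A" using C i by auto
    then show ?thesis using pQC True rp by simp
  next
    case False
    have d: "disjnt (C - {i}) (\<Union>(Q - {C}))"
      using part_remove(2)[OF Q C(1)] by (simp add: disjnt_def) blast
    have "C \<subseteq> insert i A" using partition_onD1[OF Q] C(1) by blast
    then have sub: "C - {i} \<subseteq> A" by blast
    have "insert i A - C = A - (C - {i})" using C(2) i by blast
    then have "partition_on (A - (C - {i})) (Q - {C})" using pQC by simp
    then have "partition_on A (insert (C - {i}) (Q - {C}))"
      using partition_on_insert[OF d] sub False by simp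
    then show ?thesis using rp False by simp
  qed
  show "blk Q i \<in> insert {} (rem_pt Q i)" using bl rp by (cases "C - {i} = {}") simp_all
  show "add_to (rem_pt Q i) i (blk Q i) = Q"
  proof (cases "C - {i} = {}")
    case True
    then have Ci: "C = {i}" using C(2) by blast
    have "add_to (rem_pt Q i) i (blk Q i) = insert {i} (Q - {C})"
      using rp bl True by (simp add: add_to_def)
    also have "\<dots> = Q" using Ci C(1) by (simp add: insert_absorb)
    finally show ?thesis .
  next
    case False
    have nQ: "C - {i} \<notin> Q - {C}"
    proof
      assume a: "C - {i} \<in> Q - {C}"
      obtain x where x: "x \<in> C - {i}" using False by blast
      have "C - {i} = C" using part_uniq[OF Q _ C(1), of "C - {i}" x] a x by blast
      then show False using a by blast
    qed
    have r: "rem_pt Q i = insert (C - {i}) (Q - {C})" using rp False by simp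
    have "rem_pt Q i - {C - {i}} = Q - {C}" unfolding r using nQ by simp
    then have "add_to (rem_pt Q i) i (blk Q i) = insert (insert i (C - {i})) (Q - {C})"
      using bl False by (simp add: add_to_def)
    also have "insert i (C - {i}) = C" using C(2) by blast
    also have "insert C (Q - {C}) = Q" using C(1) by (simp add: insert_absorb)
    finally show ?thesis .
  qed
qed

lemma sum_ins:
  assumes "finite A" "i \<notin> A"
  shows "(\<Sum>Q\<in>partitions (insert i A). g Q) = (\<Sum>P\<in>partitions A. \<Sum>B\<in>insert {} P. g (add_to P i B))"
proof -
  have bij: "bij_betw (\<lambda>(P,B). add_to P i B) (SIGMA P:partitions A. insert {} P) (partitions (insert i A))"
  proof (rule bij_betw_byWitness[where f' = "\<lambda>Q. (rem_pt Q i, blk Q i)"])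
    show "\<forall>a\<in>(SIGMA P:partitions A. insert {} P). (rem_pt (case a of (P, B) \<Rightarrow> add_to P i B) i, blk (case a of (P, B) \<Rightarrow> add_to P i B) i) = a"
    proof (intro ballI)
      fix a assume "a \<in> (SIGMA P:partitions A. insert {} P)"
      then obtain P B where "a = (P,B)" "partition_on A P" "B \<in> insert {} P" by (auto simp: partitions_def)
      then show "(rem_pt (case a of (P, B) \<Rightarrow> add_to P i B) i, blk (case a of (P, B) \<Rightarrow> add_to P i B) i) = a"
        using rem_add[of A P i B] assms by simp
    qed
    show "\<forall>a'\<in>partitions (insert i A). (case (rem_pt a' i, blk a' i) of (P, B) \<Rightarrow> add_to P i B) = a'"
    proof
      fix Q assume "Q \<in> partitions (insert i A)"
      then show "(case (rem_pt Q i, blk Q i) of (P, B) \<Rightarrow> add_to P i B) = Q"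
        using rem_part(3)[of i A Q] assms by (simp add: partitions_def)
    qed
    show "(\<lambda>(P, B). add_to P i B) ` (SIGMA P:partitions A. insert {} P) \<subseteq> partitions (insert i A)"
    proof
      fix Q assume "Q \<in> (\<lambda>(P, B). add_to P i B) ` (SIGMA P:partitions A. insert {} P)"
      then obtain P B where "Q = add_to P i B" "partition_on A P" "B \<in> insert {} P" by (auto simp: partitions_def)
      then show "Q \<in> partitions (insert i A)" using add_to_part[of A P i B] assms by (simp add: partitions_def)
    qed
    show "(\<lambda>Q. (rem_pt Q i, blk Q i)) ` partitions (insert i A) \<subseteq> (SIGMA P:partitions A. insert {} P)"
    proof
      fix x assume "x \<in> (\<lambda>Q. (rem_pt Q i, blk Q i)) ` partitions (insert i A)"
      then obtain Q where "x = (rem_pt Q i, blk Q i)" "partition_on (insert i A) Q" by (auto simp: partitions_def)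
      then show "x \<in> (SIGMA P:partitions A. insert {} P)"
        using rem_part(1,2)[of i A Q] assms by (simp add: partitions_def)
    qed
  qed
  have fin: "finite (partitions A)" using assms by (simp add: partitions_def finitely_many_partition_on)
  have fin2: "\<And>P. P \<in> partitions A \<Longrightarrow> finite (insert {} P)"
    using assms by (auto simp: partitions_def intro: finite_elements)
  have "(\<Sum>Q\<in>partitions (insert i A). g Q) = (\<Sum>x\<in>(SIGMA P:partitions A. insert {} P). g ((\<lambda>(P,B). add_to P i B) x))"
    using sum.reindex_bij_betw[OF bij, of g] by simp
  also have "\<dots> = (\<Sum>P\<in>partitions A. \<Sum>B\<in>insert {} P. g (add_to P i B))"
    using sum.Sigma[OF fin, of "\<lambda>P. insert {} P" "\<lambda>P B. g (add_to P i B)"] fin2 by (simp add: split_def)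
  finally show ?thesis .
qed

lemma part_fin_block: "finite A \<Longrightarrow> partition_on A P \<Longrightarrow> p \<in> P \<Longrightarrow> finite p"
  by (metis Union_upper partition_onD1 rev_finite_subset)

definition wt :: "'a set \<Rightarrow> real" where
  "wt B = (if B = {} then 1 else real (card B))"

lemma prod_add_to:
  assumes A: "finite A" and P: "partition_on A P" and i: "i \<notin> A" and B: "B \<in> insert {} P"
  shows "(\<Prod>D\<in>add_to P i B. (fact (card D - 1) :: real)) = (\<Prod>D\<in>P. fact (card D - 1)) * wt B"
proof -
  have fP: "finite P" using A P by (rule finite_elements)
  have iP: "\<And>C. C \<in> P \<Longrightarrow> i \<notin> C" using P i by (auto simp: partition_on_def)
  show ?thesis
  proof (cases "B = {}")
    case True
    have "{i} \<notin> P" using iP by auto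
    then show ?thesis using True fP by (simp add: add_to_def wt_def)
  next
    case False
    then have BP: "B \<in> P" using B by auto
    have fB: "finite B" using A P BP by (rule part_fin_block)
    have iB: "i \<notin> B" using iP BP by auto
    have c: "card B \<ge> 1" using fB False by (simp add: Suc_leI card_gt_0_iff)
    have "insert i B \<notin> P - {B}" using iP by auto
    then have "(\<Prod>D\<in>add_to P i B. (fact (card D - 1) :: real)) = fact (card B) * (\<Prod>D\<in>P - {B}. fact (card D - 1))"
      using False fP fB iB by (simp add: add_to_def)
    also have "fact (card B) = real (card B) * (fact (card B - 1) :: real)"
      using c by (metis Suc_diff_1 fact_Suc less_eq_Suc_le of_nat_fact of_nat_mult One_nat_def mult.commute)
    also have "(\<Prod>D\<in>P. (fact (card D - 1) :: real)) = fact (card B - 1) * (\<Prod>D\<in>P - {B}. fact (card D - 1))"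
      using fP BP by (simp add: prod.remove)
    ultimately show ?thesis using False by (simp add: wt_def)
  qed
qed

lemma sum_wt:
  assumes A: "finite A" and P: "partition_on A P"
  shows "(\<Sum>B\<in>insert {} P. wt B) = real (card A) + 1"
proof -
  have fP: "finite P" using A P by (rule finite_elements)
  have ne: "{} \<notin> P" using P by (auto simp: partition_on_def)
  have fin: "\<And>p. p \<in> P \<Longrightarrow> finite p" using A P by (rule part_fin_block)
  have "(\<Sum>B\<in>insert {} P. wt B) = 1 + (\<Sum>B\<in>P. wt B)" using fP ne by (simp add: wt_def)
  also have "(\<Sum>B\<in>P. wt B) = (\<Sum>B\<in>P. real (card B))"
    using ne by (intro sum.cong) (auto simp: wt_def)
  also have "\<dots> = real (card A)" using product_partition[OF P fin] by simp
  finally show ?thesis by simp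
qed

lemma ewens_add:
  assumes A: "finite A" and P: "partition_on A P" and i: "i \<notin> A" and B: "B \<in> insert {} P"
  shows "ewens (insert i A) (add_to P i B) = ewens A P * wt B / (real (card A) + 1)"
proof -
  have "fact (card (insert i A)) = (real (card A) + 1) * (fact (card A) :: real)"
    using A i by (simp add: algebra_simps)
  then show ?thesis using prod_add_to[OF A P i B] by (simp add: ewens_def field_simps)
qed

lemma ewens_sum:
  assumes "finite A"
  shows "(\<Sum>Q\<in>partitions A. ewens A Q) = 1"
  using assms
proof (induction A rule: finite_induct)
  case empty
  have "partitions ({}::'a set) = {{}}" by (auto simp: partitions_def partition_on_empty)
  then show ?case by (simp add: ewens_def)
next
  case (insert i A)
  have "(\<Sum>Q\<in>partitions (insert i A). ewens (insert i A) Q)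
      = (\<Sum>P\<in>partitions A. \<Sum>B\<in>insert {} P. ewens (insert i A) (add_to P i B))"
    by (rule sum_ins) (use insert in auto)
  also have "\<dots> = (\<Sum>P\<in>partitions A. ewens A P)"
  proof (rule sum.cong)
    fix P assume "P \<in> partitions A"
    then have P: "partition_on A P" by (simp add: partitions_def)
    have "(\<Sum>B\<in>insert {} P. ewens (insert i A) (add_to P i B)) = (\<Sum>B\<in>insert {} P. ewens A P / (real (card A) + 1) * wt B)"
      using ewens_add[OF insert(1) P insert(2)] by (intro sum.cong) auto
    also have "\<dots> = ewens A P / (real (card A) + 1) * (\<Sum>B\<in>insert {} P. wt B)"
      by (simp only: sum_distrib_left)
    also have "\<dots> = ewens A P / (real (card A) + 1) * (real (card A) + 1)"
      using sum_wt[OF insert(1) P] by simp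
    finally show "(\<Sum>B\<in>insert {} P. ewens (insert i A) (add_to P i B)) = ewens A P" by simp
  qed simp
  finally show ?case using insert by simp
qed

lemma ewens_pos:
  assumes "finite A" "partition_on A Q"
  shows "ewens A Q > 0"
  unfolding ewens_def by (intro divide_pos_pos prod_pos) auto

definition cf :: "'a set \<Rightarrow> 'a set \<Rightarrow> real" where
  "cf N S = fact (card S) * fact (card N - card S - 1) / fact (card N)"

lemma emb_Sigma: "emb M = Sigma (Pow M) (\<lambda>T. partitions (M - T))"
  by (auto simp: emb_def)

lemma part_ins_block:
  assumes "partition_on (M - T) P" "T \<subseteq> M" "i \<notin> M"
  shows "partition_on (insert i M) (insert (insert i T) P)"
proof -
  have d: "disjnt (insert i T) (\<Union>P)" using assms by (auto simp: partition_on_def disjnt_def)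
  have "insert i M - insert i T = M - T" using assms by auto
  then have "partition_on (insert i M - insert i T) P" using assms(1) by simp
  moreover have "insert i T \<subseteq> insert i M" using assms(2) by auto
  ultimately show ?thesis using partition_on_insert[OF d] by simp
qed

lemma part_ins_T:
  assumes "partition_on (N - T) Q" "T \<subseteq> N" "T \<noteq> {}"
  shows "partition_on N (insert T Q)"
proof -
  have d: "disjnt T (\<Union>Q)" using assms by (auto simp: partition_on_def disjnt_def)
  have "N - T = N - T" ..
  then show ?thesis using partition_on_insert[OF d] assms by simp
qed

lemma dsum: "(\<Sum>P\<in>I. \<Sum>B\<in>J P. (c::real) * (f P B - g P B)) = c * ((\<Sum>P\<in>I. \<Sum>B\<in>J P. f P B) - (\<Sum>P\<in>I. \<Sum>B\<in>J P. g P B))"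
  by (simp add: sum_subtractf sum_distrib_left right_diff_distrib)

lemma ralg1: "(c::real) * e * w / k * (x - y) = c * (e * w / k * x - e * w / k * y)"
  by (simp add: divide_inverse algebra_simps)

lemma MPW_repr:
  assumes N: "finite N" and i: "i \<in> N"
  shows "MPW N w i = (\<Sum>S\<in>Pow (N - {i}). \<Sum>P\<in>partitions (N - {i} - S). \<Sum>B\<in>insert {} P.
      cf N S * ewens (N - {i} - S) P * wt B / (real (card (N - {i} - S)) + 1)
      * (w (insert i S) P - w S (add_to P i B)))"
  unfolding MPW_def shapley_def
proof (rule sum.cong[OF refl])
  fix S assume S: "S \<in> Pow (N - {i})"
  define A where "A = N - {i} - S"
  have fA: "finite A" using N by (simp add: A_def)
  have iA: "i \<notin> A" by (simp add: A_def)
  have e1: "N - insert i S = A" by (auto simp: A_def)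
  have e2: "N - S = insert i A" using S i by (auto simp: A_def)
  have v1: "(\<Sum>P\<in>partitions A. ewens A P * w (insert i S) P)
      = (\<Sum>P\<in>partitions A. \<Sum>B\<in>insert {} P. ewens A P * wt B / (real (card A) + 1) * w (insert i S) P)"
  proof (rule sum.cong[OF refl])
    fix P assume "P \<in> partitions A"
    then have P: "partition_on A P" by (simp add: partitions_def)
    have "(\<Sum>B\<in>insert {} P. ewens A P * wt B / (real (card A) + 1) * w (insert i S) P)
        = (\<Sum>B\<in>insert {} P. (ewens A P / (real (card A) + 1) * w (insert i S) P) * wt B)"
      by (intro sum.cong refl) (simp add: field_simps)
    also have "\<dots> = (ewens A P / (real (card A) + 1) * w (insert i S) P) * (\<Sum>B\<in>insert {} P. wt B)"
      by (rule sum_distrib_left[symmetric])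
    also have "\<dots> = ewens A P * w (insert i S) P" using sum_wt[OF fA P]
      by (simp add: field_simps)
    finally show "ewens A P * w (insert i S) P = (\<Sum>B\<in>insert {} P. ewens A P * wt B / (real (card A) + 1) * w (insert i S) P)" by (rule sym)
  qed
  have v2: "(\<Sum>Q\<in>partitions (insert i A). ewens (insert i A) Q * w S Q)
      = (\<Sum>P\<in>partitions A. \<Sum>B\<in>insert {} P. ewens A P * wt B / (real (card A) + 1) * w S (add_to P i B))"
    unfolding sum_ins[OF fA iA]
  proof (intro sum.cong[OF refl])
    fix P B assume "P \<in> partitions A" "B \<in> insert {} P"
    then show "ewens (insert i A) (add_to P i B) * w S (add_to P i B) = ewens A P * wt B / (real (card A) + 1) * w S (add_to P i B)"
      using ewens_add[OF fA _ iA, of P B] by (simp add: partitions_def)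
  qed
  show "fact (card S) * fact (card N - card S - 1) / fact (card N) *
         ((\<Sum>P\<in>partitions (N - insert i S). ewens (N - insert i S) P * w (insert i S) P) -
          (\<Sum>P\<in>partitions (N - S). ewens (N - S) P * w S P)) =
        (\<Sum>P\<in>partitions (N - {i} - S). \<Sum>B\<in>insert {} P.
           cf N S * ewens (N - {i} - S) P * wt B / (real (card (N - {i} - S)) + 1) *
           (w (insert i S) P - w S (add_to P i B)))"
  proof -
    let ?a = "\<lambda>P B. ewens A P * wt B / (real (card A) + 1)"
    have "(\<Sum>P\<in>partitions A. \<Sum>B\<in>insert {} P. cf N S * ewens A P * wt B / (real (card A) + 1) *
           (w (insert i S) P - w S (add_to P i B)))
        = (\<Sum>P\<in>partitions A. \<Sum>B\<in>insert {} P. cf N S * (?a P B * w (insert i S) P - ?a P B * w S (add_to P i B)))"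
      by (intro sum.cong refl) (rule ralg1)
    also have "\<dots> = cf N S * ((\<Sum>P\<in>partitions A. \<Sum>B\<in>insert {} P. ?a P B * w (insert i S) P)
         - (\<Sum>P\<in>partitions A. \<Sum>B\<in>insert {} P. ?a P B * w S (add_to P i B)))"
      by (rule dsum)
    finally have calc: "(\<Sum>P\<in>partitions A. \<Sum>B\<in>insert {} P. cf N S * ewens A P * wt B / (real (card A) + 1) *
           (w (insert i S) P - w S (add_to P i B))) = cf N S * ((\<Sum>P\<in>partitions A. \<Sum>B\<in>insert {} P. ?a P B * w (insert i S) P)
         - (\<Sum>P\<in>partitions A. \<Sum>B\<in>insert {} P. ?a P B * w S (add_to P i B)))" .
    have cfe: "fact (card S) * fact (card N - card S - 1) / fact (card N) = cf N S" by (simp add: cf_def)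
    show ?thesis unfolding cfe e1 e2 v1 v2 A_def[symmetric] by (rule calc[symmetric])
  qed
qed

lemma MPW_mono: "finite (U::'a set) \<Longrightarrow> monotonicity U MPW"
  unfolding monotonicity_def
proof (intro allI impI)
  fix N i and w z :: "'a set \<Rightarrow> 'a set set \<Rightarrow> real"
  assume U: "finite U" and NU: "N \<subseteq> U" and i: "i \<in> N"
    and H: "\<forall>(S, P)\<in>emb (N - {i}). \<forall>B\<in>insert {} P.
          z (insert i S) P - z S (add_to P i B) \<le> w (insert i S) P - w S (add_to P i B)"
  have N: "finite N" using U NU by (rule rev_finite_subset)
  show "MPW N z i \<le> MPW N w i"
    unfolding MPW_repr[OF N i]
  proof (intro sum_mono)
    fix S P B assume S: "S \<in> Pow (N - {i})" and P: "P \<in> partitions (N - {i} - S)" and B: "B \<in> insert {} P"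
    have c: "0 \<le> cf N S * ewens (N - {i} - S) P * wt B / (real (card (N - {i} - S)) + 1)"
    proof -
      have "0 < ewens (N - {i} - S) P" using ewens_pos[of "N - {i} - S" P] N P by (simp add: partitions_def)
      moreover have "0 \<le> cf N S" by (simp add: cf_def)
      moreover have "0 \<le> wt B" by (simp add: wt_def)
      ultimately show ?thesis by simp
    qed
    have "(S, P) \<in> emb (N - {i})" using S P by (auto simp: emb_def)
    then have "z (insert i S) P - z S (add_to P i B) \<le> w (insert i S) P - w S (add_to P i B)"
      using H B by auto
    then show "cf N S * ewens (N - {i} - S) P * wt B / (real (card (N - {i} - S)) + 1) * (z (insert i S) P - z S (add_to P i B))
      \<le> cf N S * ewens (N - {i} - S) P * wt B / (real (card (N - {i} - S)) + 1) * (w (insert i S) P - w S (add_to P i B))"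
      using c by (rule mult_left_mono)
  qed
qed

lemma fact_split: "t \<ge> 1 \<Longrightarrow> (fact t :: real) = real t * fact (t - 1)"
  by (cases t) auto

lemma ewens_block:
  assumes N: "finite N" and i: "i \<in> N" and T: "T \<subseteq> N - {i}" and P: "partition_on (N - {i} - T) P"
  shows "ewens N (insert (insert i T) P) = cf N T * ewens (N - {i} - T) P"
proof -
  have fP: "finite P" using N P by (intro finite_elements[of "N - {i} - T"]) auto
  have nin: "insert i T \<notin> P" using P by (auto simp: partition_on_def)
  have fT: "finite T" using N T by (meson finite_Diff finite_subset)
  have iT: "i \<notin> T" using T by auto
  have pr: "(\<Prod>D\<in>insert (insert i T) P. (fact (card D - 1) :: real)) = fact (card T) * (\<Prod>D\<in>P. fact (card D - 1))"
    using fP nin fT iT by simp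
  have "card N > 0" using N i card_gt_0_iff by blast
  then have cN: "card N = Suc (card (N - {i}))" using N i by simp
  have cM: "card (N - {i} - T) = card (N - {i}) - card T" using T fT by (simp add: card_Diff_subset)
  have cTle: "card T \<le> card (N - {i})" using T N by (simp add: card_mono)
  have "card N - card T - 1 = card (N - {i} - T)" using cN cM cTle by simp
  then show ?thesis unfolding ewens_def cf_def pr by simp
qed

lemma coef_arith:
  assumes "1 \<le> t" "t < n"
  shows "real t / (real n - real t) * (fact (t - 1) :: real) = fact t * fact (n - t - 1) / fact (n - t)"
proof -
  have a: "(fact t :: real) = real t * fact (t - 1)" using assms by (simp add: fact_split)
  have b: "(fact (n - t) :: real) = real (n - t) * fact (n - t - 1)" using assms by (simp add: fact_split)
  have c: "real (n - t) = real n - real t" using assms by simp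
  have d: "real n - real t > 0" using assms by simp
  show ?thesis unfolding a b c using d by (simp add: field_simps)
qed

lemma ewens_T:
  assumes N: "finite N" and i: "i \<in> N" and T: "T \<subseteq> N - {i}" and Tne: "T \<noteq> {}"
    and Q: "partition_on (N - T) Q"
  shows "real (card T) / (real (card N) - real (card T)) * ewens N (insert T Q) = cf N T * ewens (N - T) Q"
proof -
  have fQ: "finite Q" using N Q by (intro finite_elements[of "N - T"]) auto
  have nin: "T \<notin> Q" using Q Tne by (auto simp: partition_on_def)
  have pr: "(\<Prod>D\<in>insert T Q. (fact (card D - 1) :: real)) = fact (card T - 1) * (\<Prod>D\<in>Q. fact (card D - 1))"
    using fQ nin by simp
  have fT: "finite T" using N T by (meson finite_Diff finite_subset)
  have t1: "1 \<le> card T" using fT Tne by (simp add: Suc_leI card_gt_0_iff)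
  have "T \<subset> N" using T i by blast
  then have tn: "card T < card N" by (rule psubset_card_mono[OF N])
  have "T \<subseteq> N" using T by blast
  then have cNT: "card (N - T) = card N - card T" using fT by (simp add: card_Diff_subset)
  have "real (card T) / (real (card N) - real (card T)) * ewens N (insert T Q)
      = (real (card T) / (real (card N) - real (card T)) * fact (card T - 1)) * (\<Prod>D\<in>Q. fact (card D - 1)) / fact (card N)"
    unfolding ewens_def pr by simp
  also have "\<dots> = fact (card T) * fact (card N - card T - 1) / fact (card N - card T) * (\<Prod>D\<in>Q. fact (card D - 1)) / fact (card N)"
    using coef_arith[OF t1 tn] by simp
  also have "\<dots> = cf N T * ewens (N - T) Q"
    unfolding cf_def ewens_def cNT by simp
  finally show ?thesis .
qed

lemma pshap_ewens:
  assumes N: "finite N" and i: "i \<in> N" and w: "tux_game N w"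
    and pe: "\<forall>Q\<in>partitions N. p N Q = ewens N Q"
  shows "p_shapley p N w i = MPW N w i"
proof -
  let ?M = "N - {i}"
  let ?F = "\<lambda>T P. p N (insert (insert i T) P) * w (insert i T) P
       - real (card T) / (real (card N) - real (card T)) *
         (\<Sum>B\<in>insert {} P. p N (insert T (add_to P i B)) * w T (add_to P i B))"
  have finM: "finite (Pow ?M)" using N by simp
  have finP: "\<forall>T\<in>Pow ?M. finite (partitions (?M - T))"
    using N by (simp add: partitions_def finitely_many_partition_on)
  have "p_shapley p N w i = (\<Sum>(T,P)\<in>Sigma (Pow ?M) (\<lambda>T. partitions (?M - T)). ?F T P)"
    unfolding p_shapley_def emb_Sigma ..
  also have "\<dots> = (\<Sum>T\<in>Pow ?M. \<Sum>P\<in>partitions (?M - T). ?F T P)"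
    by (rule sum.Sigma[OF finM finP, symmetric])
  also have "\<dots> = MPW N w i"
    unfolding MPW_def shapley_def
  proof (rule sum.cong[OF refl])
    fix T assume T: "T \<in> Pow ?M"
    then have Tsub: "T \<subseteq> ?M" by simp
    define A where "A = ?M - T"
    have fA: "finite A" using N by (simp add: A_def)
    have iA: "i \<notin> A" by (simp add: A_def)
    have e1: "N - insert i T = A" by (auto simp: A_def)
    have e2: "N - T = insert i A" using Tsub i by (auto simp: A_def)
    let ?c = "real (card T) / (real (card N) - real (card T))"
    have s1: "(\<Sum>P\<in>partitions A. p N (insert (insert i T) P) * w (insert i T) P)
        = cf N T * (\<Sum>P\<in>partitions A. ewens A P * w (insert i T) P)"
      unfolding sum_distrib_left
    proof (rule sum.cong[OF refl])
      fix P assume "P \<in> partitions A"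
      then have P: "partition_on (N - {i} - T) P" by (simp add: partitions_def A_def)
      have "insert (insert i T) P \<in> partitions N"
        using part_ins_block[OF P Tsub, of i] i by (simp add: partitions_def insert_absorb)
      then have "p N (insert (insert i T) P) = ewens N (insert (insert i T) P)" using pe by blast
      also have "\<dots> = cf N T * ewens A P" using ewens_block[OF N i Tsub P] by (simp add: A_def)
      finally show "p N (insert (insert i T) P) * w (insert i T) P = cf N T * (ewens A P * w (insert i T) P)"
        by simp
    qed
    have s2: "(\<Sum>P\<in>partitions A. \<Sum>B\<in>insert {} P. p N (insert T (add_to P i B)) * w T (add_to P i B))
        = (\<Sum>Q\<in>partitions (insert i A). p N (insert T Q) * w T Q)"
      by (rule sum_ins[OF fA iA, symmetric])
    have s3: "?c * (\<Sum>Q\<in>partitions (insert i A). p N (insert T Q) * w T Q)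
        = cf N T * (\<Sum>Q\<in>partitions (insert i A). ewens (insert i A) Q * w T Q)"
    proof (cases "T = {}")
      case True
      have "(\<Sum>Q\<in>partitions (insert i A). ewens (insert i A) Q * w T Q) = 0"
        using w True e2 by (simp add: tux_game_def)
      then show ?thesis using True by simp
    next
      case False
      show ?thesis unfolding sum_distrib_left
      proof (rule sum.cong[OF refl])
        fix Q assume "Q \<in> partitions (insert i A)"
        then have Q: "partition_on (N - T) Q" using e2 by (simp add: partitions_def)
        have "insert T Q \<in> partitions N" using part_ins_T[OF Q _ False] Tsub by (auto simp: partitions_def)
        then have "p N (insert T Q) = ewens N (insert T Q)" using pe by blast
        then have "?c * p N (insert T Q) = cf N T * ewens (N - T) Q"
          using ewens_T[OF N i Tsub False Q] by simp
        then show "?c * (p N (insert T Q) * w T Q) = cf N T * (ewens (insert i A) Q * w T Q)"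
          using e2 by (simp add: mult.assoc[symmetric])
      qed
    qed
    have "(\<Sum>P\<in>partitions A. ?F T P)
        = (\<Sum>P\<in>partitions A. p N (insert (insert i T) P) * w (insert i T) P)
          - ?c * (\<Sum>P\<in>partitions A. \<Sum>B\<in>insert {} P. p N (insert T (add_to P i B)) * w T (add_to P i B))"
      by (simp only: sum_subtractf sum_distrib_left)
    also have "\<dots> = cf N T * ((\<Sum>P\<in>partitions A. ewens A P * w (insert i T) P)
        - (\<Sum>Q\<in>partitions (insert i A). ewens (insert i A) Q * w T Q))"
      unfolding s1 s2 s3 by (simp only: right_diff_distrib)
    finally show "(\<Sum>P\<in>partitions (?M - T). ?F T P) =
      fact (card T) * fact (card N - card T - 1) / fact (card N) *
      ((\<Sum>P\<in>partitions (N - insert i T). ewens (N - insert i T) P * w (insert i T) P) -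
       (\<Sum>P\<in>partitions (N - T). ewens (N - T) P * w T P))"
      unfolding e1 e2 A_def[symmetric] cf_def .
  qed
  finally show ?thesis .
qed

lemma p_shapley_zero: "p_shapley p N (\<lambda>_ _. 0) i = 0"
  unfolding p_shapley_def by simp

lemma null_constraint:
  assumes mono: "monotonicity U (p_shapley p)" and U: "finite U" and NU: "N \<subseteq> U" and i: "i \<in> N"
    and S: "S \<subseteq> N - {i}" and Sne: "S \<noteq> {}" and P: "partition_on (N - {i} - S) P"
  shows "p N (insert (insert i S) P)
     = real (card S) / (real (card N) - real (card S)) * (\<Sum>B\<in>insert {} P. p N (insert S (add_to P i B)))"
proof -
  have N: "finite N" using U NU by (rule rev_finite_subset)
  define h :: "'a set \<Rightarrow> 'a set set \<Rightarrow> real" where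
    "h = (\<lambda>S' P'. if (S' = insert i S \<and> P' = P) \<or> (S' = S \<and> (\<exists>B\<in>insert {} P. P' = add_to P i B)) then 1 else 0)"
  define z :: "'a set \<Rightarrow> 'a set set \<Rightarrow> real" where "z = (\<lambda>_ _. 0)"
  have iS: "i \<notin> S" using S by blast
  have K1: "h (insert i S') P' = (if (S', P') = (S, P) then 1 else 0)" if "S' \<subseteq> N - {i}" for S' P'
  proof -
    have "i \<notin> S'" using that by blast
    then have "(insert i S' = insert i S) = (S' = S)" using iS by (metis insert_ident)
    moreover have "insert i S' \<noteq> S" using iS by blast
    ultimately show ?thesis unfolding h_def by auto
  qed
  have K2: "h S' (add_to P' i B') = (if (S', P') = (S, P) then 1 else 0)"
    if "(S', P') \<in> emb (N - {i})" "B' \<in> insert {} P'" for S' P' B'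
  proof -
    have S': "S' \<subseteq> N - {i}" and P': "partition_on (N - {i} - S') P'"
      using that(1) by (auto simp: emb_def partitions_def)
    have "S' \<noteq> insert i S" using S' by blast
    moreover have "(S' = S \<and> (\<exists>B\<in>insert {} P. add_to P' i B' = add_to P i B)) = ((S', P') = (S, P))"
    proof
      assume a: "S' = S \<and> (\<exists>B\<in>insert {} P. add_to P' i B' = add_to P i B)"
      then obtain B where B: "B \<in> insert {} P" "add_to P' i B' = add_to P i B" by blast
      have "P' = rem_pt (add_to P' i B') i" using rem_add(1)[OF P' _ that(2)] by simp
      also have "\<dots> = rem_pt (add_to P i B) i" using B by simp
      also have "\<dots> = P" using rem_add(1)[OF P _ B(1)] by simp
      finally show "(S', P') = (S, P)" using a by simp
    next
      assume "(S', P') = (S, P)"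
      then show "S' = S \<and> (\<exists>B\<in>insert {} P. add_to P' i B' = add_to P i B)" using that(2) by auto
    qed
    ultimately show ?thesis unfolding h_def by auto
  qed
  have tz: "tux_game N z" by (simp add: tux_game_def z_def)
  have th: "tux_game N h" using Sne by (simp add: tux_game_def h_def)
  have H0: "h (insert i S') P' - h S' (add_to P' i B') = z (insert i S') P' - z S' (add_to P' i B')"
    if a: "(S', P') \<in> emb (N - {i})" "B' \<in> insert {} P'" for S' P' B'
  proof -
    have "S' \<subseteq> N - {i}" using a by (simp add: emb_def)
    then show ?thesis using K1 K2[OF a] by (simp add: z_def)
  qed
  have H: "\<forall>(S', P')\<in>emb (N - {i}). \<forall>B\<in>insert {} P'.
          h (insert i S') P' - h S' (add_to P' i B) = z (insert i S') P' - z S' (add_to P' i B)"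
    using H0 by blast
  have M: "\<And>w z. tux_game N w \<Longrightarrow> tux_game N z \<Longrightarrow>
      (\<forall>(S, P)\<in>emb (N - {i}). \<forall>B\<in>insert {} P. w (insert i S) P - w S (add_to P i B) \<ge> z (insert i S) P - z S (add_to P i B))
      \<Longrightarrow> p_shapley p N w i \<ge> p_shapley p N z i"
    using mono NU i unfolding monotonicity_def by blast
  have Hge: "\<forall>(S', P')\<in>emb (N - {i}). \<forall>B\<in>insert {} P'.
          h (insert i S') P' - h S' (add_to P' i B) \<ge> z (insert i S') P' - z S' (add_to P' i B)"
    using H0 by fastforce
  have Hle: "\<forall>(S', P')\<in>emb (N - {i}). \<forall>B\<in>insert {} P'.
          z (insert i S') P' - z S' (add_to P' i B) \<ge> h (insert i S') P' - h S' (add_to P' i B)"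
    using H0 by fastforce
  have ge1: "p_shapley p N h i \<ge> p_shapley p N z i" by (rule M[OF th tz Hge])
  have ge2: "p_shapley p N z i \<ge> p_shapley p N h i" by (rule M[OF tz th Hle])
  have z0: "p_shapley p N z i = 0" unfolding z_def by (rule p_shapley_zero)
  let ?G = "p N (insert (insert i S) P)
     - real (card S) / (real (card N) - real (card S)) * (\<Sum>B\<in>insert {} P. p N (insert S (add_to P i B)))"
  have "p_shapley p N h i = (\<Sum>x\<in>emb (N - {i}). if x = (S, P) then ?G else 0)"
    unfolding p_shapley_def
  proof (rule sum.cong[OF refl])
    fix x assume x: "x \<in> emb (N - {i})"
    obtain S' P' where xe: "x = (S', P')" by (cases x)
    have S': "S' \<subseteq> N - {i}" using x xe by (simp add: emb_def)
    have in2: "(\<Sum>B\<in>insert {} P'. p N (insert S' (add_to P' i B)) * h S' (add_to P' i B))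
       = (if (S', P') = (S, P) then (\<Sum>B\<in>insert {} P'. p N (insert S' (add_to P' i B))) else 0)"
      using K2[of S' P'] x xe by (auto intro: sum.neutral)
    show "(case x of (T, P) \<Rightarrow> p N (insert (insert i T) P) * h (insert i T) P -
          real (card T) / (real (card N) - real (card T)) *
          (\<Sum>B\<in>insert {} P. p N (insert T (add_to P i B)) * h T (add_to P i B))) =
         (if x = (S, P) then ?G else 0)"
      unfolding xe using K1[OF S'] in2 by auto
  qed
  also have "\<dots> = ?G"
  proof -
    have "(S, P) \<in> emb (N - {i})" using S P by (simp add: emb_def partitions_def)
    moreover have "finite (emb (N - {i}))"
      unfolding emb_Sigma using N by (auto simp: partitions_def finitely_many_partition_on)
    ultimately show ?thesis by (simp add: sum.delta')
  qed
  finally have "?G = 0" using ge1 ge2 z0 by linarith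
  then show ?thesis by simp
qed

lemma ewens_QB:
  assumes N: "finite N" and i: "i \<in> N" and S: "S \<subseteq> N - {i}" and Sne: "S \<noteq> {}"
    and P: "partition_on (N - {i} - S) P" and B: "B \<in> insert {} P"
  shows "ewens N (insert S (add_to P i B)) * real (card S) = ewens N (insert (insert i S) P) * wt B"
proof -
  define A where "A = N - {i} - S"
  have fA: "finite A" using N by (simp add: A_def)
  have iA: "i \<notin> A" by (simp add: A_def)
  have PA: "partition_on A P" using P by (simp add: A_def)
  have eA: "insert i A = N - S" using S i by (auto simp: A_def)
  have Q: "partition_on (N - S) (add_to P i B)" using add_to_part[OF PA iA B] eA by simp
  have fQ: "finite (add_to P i B)" using N Q by (intro finite_elements[of "N - S"]) auto
  have nS: "S \<notin> add_to P i B"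
  proof
    assume "S \<in> add_to P i B"
    then have "S \<subseteq> N - S" using partition_onD1[OF Q] by blast
    then show False using Sne by blast
  qed
  have fP: "finite P" using fA PA by (rule finite_elements)
  have iS: "i \<notin> S" using S by blast
  have nin: "insert i S \<notin> P" using partition_onD1[OF PA] iA by blast
  have fS: "finite S" using N S by (meson finite_Diff finite_subset)
  have s1: "1 \<le> card S" using fS Sne by (simp add: Suc_leI card_gt_0_iff)
  have p1: "(\<Prod>D\<in>insert S (add_to P i B). (fact (card D - 1) :: real))
      = fact (card S - 1) * ((\<Prod>D\<in>P. fact (card D - 1)) * wt B)"
    using fQ nS prod_add_to[OF fA PA iA B] by simp
  have p2: "(\<Prod>D\<in>insert (insert i S) P. (fact (card D - 1) :: real)) = fact (card S) * (\<Prod>D\<in>P. fact (card D - 1))"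
    using fP nin fS iS by simp
  have "(fact (card S) :: real) = real (card S) * fact (card S - 1)" using s1 by (rule fact_split)
  then show ?thesis unfolding ewens_def p1 p2 by (simp add: field_simps)
qed

lemma avg_ext:
  fixes a y :: "'b \<Rightarrow> real"
  assumes I: "finite I" and j: "j \<in> I" and a0: "\<forall>k\<in>I. a k \<ge> 0" and aj: "a j > 0"
    and s1: "(\<Sum>k\<in>I. a k) = 1" and x: "x = (\<Sum>k\<in>I. a k * y k)" and le: "\<forall>k\<in>I. y k \<le> x"
  shows "y j = x"
proof -
  have "(\<Sum>k\<in>I. a k * (x - y k)) = (\<Sum>k\<in>I. x * a k - a k * y k)"
    by (rule sum.cong) (simp_all add: algebra_simps)
  also have "\<dots> = (\<Sum>k\<in>I. x * a k) - (\<Sum>k\<in>I. a k * y k)" by (rule sum_subtractf)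
  also have "\<dots> = x * (\<Sum>k\<in>I. a k) - (\<Sum>k\<in>I. a k * y k)" by (simp only: sum_distrib_left)
  also have "\<dots> = 0" unfolding s1 x[symmetric] by simp
  finally have z: "(\<Sum>k\<in>I. a k * (x - y k)) = 0" .
  have nn: "\<And>k. k \<in> I \<Longrightarrow> a k * (x - y k) \<ge> 0"
  proof -
    fix k assume k: "k \<in> I"
    have "a k \<ge> 0" using a0 k by blast
    moreover have "x - y k \<ge> 0" using le k by fastforce
    ultimately show "a k * (x - y k) \<ge> 0" by (rule mult_nonneg_nonneg)
  qed
  have e: "((\<Sum>k\<in>I. a k * (x - y k)) = 0) = (\<forall>k\<in>I. a k * (x - y k) = 0)"
    by (rule sum_nonneg_eq_0_iff[OF I nn])
  have "\<forall>k\<in>I. a k * (x - y k) = 0" using e z by (rule iffD1)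
  then have "a j * (x - y j) = 0" using j by (rule bspec)
  then show ?thesis using aj by simp
qed

lemma maxprin:
  fixes f :: "'b \<Rightarrow> real" and \<mu> :: "'b \<Rightarrow> nat"
  assumes X: "finite X" and Q0: "Q0 \<in> X"
    and step: "\<And>Q. Q \<in> X \<Longrightarrow> Q \<noteq> Q0 \<Longrightarrow> \<exists>Q'\<in>X. \<mu> Q < \<mu> Q' \<and> ((\<forall>R\<in>X. f R \<le> f Q) \<longrightarrow> f Q' = f Q)"
  shows "\<forall>R\<in>X. f R \<le> f Q0"
proof -
  define m where "m = Max (f ` X)"
  have Xne: "X \<noteq> {}" using Q0 by blast
  have mge: "\<And>R. R \<in> X \<Longrightarrow> f R \<le> m" unfolding m_def using X by simp
  have "m \<in> f ` X" unfolding m_def using X Xne by simp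
  then obtain R0 where R0: "R0 \<in> X" "f R0 = m" by auto
  define Mx where "Mx = {Q\<in>X. f Q = m}"
  have fM: "finite Mx" using X by (simp add: Mx_def)
  have R0M: "R0 \<in> Mx" using R0 by (simp add: Mx_def)
  define k where "k = Max (\<mu> ` Mx)"
  have "k \<in> \<mu> ` Mx" unfolding k_def using fM R0M by (intro Max_in) auto
  then obtain Q1 where Q1: "Q1 \<in> Mx" "\<mu> Q1 = k" by auto
  have kge: "\<And>R. R \<in> Mx \<Longrightarrow> \<mu> R \<le> k" unfolding k_def using fM by simp
  have "Q1 = Q0"
  proof (rule ccontr)
    assume ne: "Q1 \<noteq> Q0"
    have Q1X: "Q1 \<in> X" and fQ1: "f Q1 = m" using Q1 by (auto simp: Mx_def)
    obtain Q' where Q': "Q' \<in> X" "\<mu> Q1 < \<mu> Q'" "(\<forall>R\<in>X. f R \<le> f Q1) \<longrightarrow> f Q' = f Q1"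
      using step[OF Q1X ne] by blast
    have "\<forall>R\<in>X. f R \<le> f Q1" using mge fQ1 by simp
    then have "f Q' = m" using Q'(3) fQ1 by simp
    then have "Q' \<in> Mx" using Q'(1) by (simp add: Mx_def)
    then have "\<mu> Q' \<le> k" by (rule kge)
    then show False using Q'(2) Q1(2) by simp
  qed
  then have "f Q0 = m" using Q1 by (simp add: Mx_def)
  then show ?thesis using mge by simp
qed

lemma ar2: "(s::real) > 0 \<Longrightarrow> d > 0 \<Longrightarrow> s / d * (E * w / s * F) = E * (w / d * F)"
  by (simp add: field_simps)

lemma avg_rel:
  assumes mono: "monotonicity U (p_shapley p)" and U: "finite U" and NU: "N \<subseteq> U"
    and Q: "Q \<in> partitions N" and C: "C \<in> Q" and iC: "i \<in> C" and ne: "C - {i} \<noteq> {}"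
  shows "p N Q / ewens N Q = (\<Sum>B\<in>insert {} (Q - {C}).
            wt B / (real (card N) - real (card (C - {i}))) *
            (p N (insert (C - {i}) (add_to (Q - {C}) i B)) / ewens N (insert (C - {i}) (add_to (Q - {C}) i B))))"
    "\<forall>B\<in>insert {} (Q - {C}). insert (C - {i}) (add_to (Q - {C}) i B) \<in> partitions N"
    "(\<Sum>B\<in>insert {} (Q - {C}). wt B / (real (card N) - real (card (C - {i})))) = 1"
    "card Q < card (insert (C - {i}) (add_to (Q - {C}) i {}))"
    "finite (insert {} (Q - {C}))"
    "real (card N) - real (card (C - {i})) > 0"
proof -
  define S where "S = C - {i}"
  define P where "P = Q - {C}"
  have N: "finite N" using U NU by (rule rev_finite_subset)
  have Qp: "partition_on N Q" using Q by (simp add: partitions_def)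
  have CN: "C \<subseteq> N" using partition_onD1[OF Qp] C by blast
  have i: "i \<in> N" using CN iC by blast
  have S: "S \<subseteq> N - {i}" using CN by (auto simp: S_def)
  have Sne: "S \<noteq> {}" using ne by (simp add: S_def)
  have eNC: "N - {i} - S = N - C" using iC by (auto simp: S_def)
  have P: "partition_on (N - {i} - S) P" unfolding eNC P_def by (rule part_remove(1)[OF Qp C])
  have iS: "insert i S = C" using iC by (auto simp: S_def)
  have QiS: "insert (insert i S) P = Q" unfolding iS P_def using C by (simp add: insert_absorb)
  define A where "A = N - {i} - S"
  have fA: "finite A" using N by (simp add: A_def)
  have iA: "i \<notin> A" by (simp add: A_def)
  have PA: "partition_on A P" using P by (simp add: A_def)
  have eA: "insert i A = N - S" using S i by (auto simp: A_def)
  have fP: "finite P" using fA PA by (rule finite_elements)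
  show fin: "finite (insert {} (Q - {C}))" using fP by (simp add: P_def)
  have QB: "insert S (add_to P i B) \<in> partitions N" if B: "B \<in> insert {} P" for B
  proof -
    have "partition_on (N - S) (add_to P i B)" using add_to_part[OF PA iA B] eA by simp
    then show ?thesis using part_ins_T[of N S] S Sne by (auto simp: partitions_def)
  qed
  then show "\<forall>B\<in>insert {} (Q - {C}). insert (C - {i}) (add_to (Q - {C}) i B) \<in> partitions N"
    by (simp add: S_def P_def)
  have fS: "finite S" using N S by (meson finite_Diff finite_subset)
  have fC: "finite C" using N CN by (rule rev_finite_subset)
  have cC: "card C = card S + 1" using iS fS by (metis card_insert_disjoint Diff_iff S_def singletonI Suc_eq_plus1)
  have cNC: "card (N - C) = card N - card C" using fC CN by (simp add: card_Diff_subset)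
  have CleN: "card C \<le> card N" using N CN by (rule card_mono)
  have cA: "real (card A) + 1 = real (card N) - real (card S)"
    using cNC cC CleN eNC by (simp add: A_def of_nat_diff)
  have npos: "real (card N) - real (card S) > 0" using cC CleN by simp
  then show "real (card N) - real (card (C - {i})) > 0" by (simp add: S_def)
  have spos: "real (card S) > 0" using fS Sne by (simp add: card_gt_0_iff)
  show "(\<Sum>B\<in>insert {} (Q - {C}). wt B / (real (card N) - real (card (C - {i})))) = 1"
  proof -
    have "(\<Sum>B\<in>insert {} P. wt B / (real (card N) - real (card S))) = (\<Sum>B\<in>insert {} P. wt B) / (real (card N) - real (card S))"
      by (simp add: sum_divide_distrib)
    also have "\<dots> = 1" using sum_wt[OF fA PA] cA npos by simp
    finally show ?thesis by (simp add: S_def P_def)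
  qed
  let ?c = "real (card S) / (real (card N) - real (card S))"
  let ?f = "\<lambda>R. p N R / ewens N R"
  have Qpos: "ewens N Q > 0" using ewens_pos[OF N Qp] .
  have nc: "p N Q = ?c * (\<Sum>B\<in>insert {} P. p N (insert S (add_to P i B)))"
    using null_constraint[OF mono U NU i S Sne P] QiS by simp
  have trm: "p N (insert S (add_to P i B)) = ewens N Q * wt B / real (card S) * ?f (insert S (add_to P i B))"
    if B: "B \<in> insert {} P" for B
  proof -
    have pos: "ewens N (insert S (add_to P i B)) > 0"
      using QB[OF B] ewens_pos[OF N] by (simp add: partitions_def)
    have e: "ewens N (insert S (add_to P i B)) = ewens N Q * wt B / real (card S)"
      using ewens_QB[OF N i S Sne P B] QiS spos by (simp add: field_simps)
    show ?thesis using pos unfolding e[symmetric] by simp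
  qed
  have "p N Q = ?c * (\<Sum>B\<in>insert {} P. ewens N Q * wt B / real (card S) * ?f (insert S (add_to P i B)))"
    unfolding nc using trm by (intro arg_cong[where f = "\<lambda>t. ?c * t"] sum.cong) auto
  also have "\<dots> = ewens N Q * (\<Sum>B\<in>insert {} P. wt B / (real (card N) - real (card S)) * ?f (insert S (add_to P i B)))"
    unfolding sum_distrib_left
  proof (rule sum.cong[OF refl])
    fix B assume "B \<in> insert {} P"
    show "?c * (ewens N Q * wt B / real (card S) * ?f (insert S (add_to P i B)))
        = ewens N Q * (wt B / (real (card N) - real (card S)) * ?f (insert S (add_to P i B)))"
      by (rule ar2[OF spos npos])
  qed
  finally have "?f Q = (\<Sum>B\<in>insert {} P. wt B / (real (card N) - real (card S)) * ?f (insert S (add_to P i B)))"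
    using Qpos by (simp add: field_simps)
  then show "p N Q / ewens N Q = (\<Sum>B\<in>insert {} (Q - {C}).
            wt B / (real (card N) - real (card (C - {i}))) *
            (p N (insert (C - {i}) (add_to (Q - {C}) i B)) / ewens N (insert (C - {i}) (add_to (Q - {C}) i B))))"
    by (simp add: S_def P_def)
  have fQ: "finite Q" using N Qp by (rule finite_elements)
  have "card Q > 0" using fQ C card_gt_0_iff by blast
  then have c1: "card Q = Suc (card P)" unfolding P_def using fQ C by simp
  have niP: "{i} \<notin> P" using partition_onD1[OF PA] iA by blast
  have nSP: "S \<notin> insert {i} P"
  proof
    assume "S \<in> insert {i} P"
    then show False
    proof
      assume "S = {i}" then show False using S by blast
    next
      assume "S \<in> P"
      then have "S \<subseteq> A" using partition_onD1[OF PA] by blast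
      then show False using Sne by (auto simp: A_def)
    qed
  qed
  have "card (insert S (add_to P i {})) = Suc (Suc (card P))"
    using nSP niP fP by (simp add: add_to_def)
  then show "card Q < card (insert (C - {i}) (add_to (Q - {C}) i {}))"
    using c1 by (simp add: S_def P_def)
qed

lemma avg_ext2:
  fixes a y :: "'b \<Rightarrow> real"
  assumes I: "finite I" and j: "j \<in> I" and a0: "\<forall>k\<in>I. a k \<ge> 0" and aj: "a j > 0"
    and s1: "(\<Sum>k\<in>I. a k) = 1" and x: "x = (\<Sum>k\<in>I. a k * y k)" and ge: "\<forall>k\<in>I. y k \<ge> x"
  shows "y j = x"
proof -
  have x': "- x = (\<Sum>k\<in>I. a k * (- y k))" using x by (simp add: sum_negf)
  have le': "\<forall>k\<in>I. - y k \<le> - x" using ge by simp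
  have "- y j = - x" by (rule avg_ext[OF I j a0 aj s1 x' le'])
  then show ?thesis by simp
qed

lemma singletons_unique:
  assumes Q: "partition_on N Q" and H: "\<forall>C\<in>Q. \<forall>i\<in>C. C - {i} = {}"
  shows "Q = (\<lambda>x. {x}) ` N"
proof
  show "Q \<subseteq> (\<lambda>x. {x}) ` N"
  proof
    fix C assume C: "C \<in> Q"
    have "C \<noteq> {}" using partition_onD3[OF Q] C by blast
    then obtain x where x: "x \<in> C" by blast
    then have "C = {x}" using H C by blast
    moreover have "x \<in> N" using partition_onD1[OF Q] C x by blast
    ultimately show "C \<in> (\<lambda>x. {x}) ` N" by blast
  qed
  show "(\<lambda>x. {x}) ` N \<subseteq> Q"
  proof
    fix D assume "D \<in> (\<lambda>x. {x}) ` N"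
    then obtain x where x: "x \<in> N" "D = {x}" by blast
    then have "x \<in> \<Union>Q" using partition_onD1[OF Q] by blast
    then obtain C where C: "C \<in> Q" "x \<in> C" by blast
    then have "C = {x}" using H by blast
    then show "D \<in> Q" using C x by simp
  qed
qed

lemma mono_imp_same:
  fixes U :: "'a set" and p :: "'a set \<Rightarrow> 'a set set \<Rightarrow> real"
  assumes U: "finite U" and rp: "random_partition U p" and mono: "monotonicity U (p_shapley p)"
  shows "same_rp U p ewens"
  unfolding same_rp_def
proof (intro allI impI)
  fix N assume NU: "N \<subseteq> U"
  have N: "finite N" using U NU by (rule rev_finite_subset)
  define X where "X = partitions N"
  have X: "finite X" using N by (simp add: X_def partitions_def finitely_many_partition_on)
  define Q0 where "Q0 = (\<lambda>x. {x}) ` N"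
  have Q0: "Q0 \<in> X" by (simp add: X_def Q0_def partitions_def partition_on_singletons)
  define f where "f = (\<lambda>R. p N R / ewens N R)"
  have data: "\<exists>Q'\<in>X. card Q < card Q' \<and> ((\<forall>R\<in>X. f R \<le> f Q) \<longrightarrow> f Q' = f Q)
       \<and> ((\<forall>R\<in>X. f R \<ge> f Q) \<longrightarrow> f Q' = f Q)"
    if Q: "Q \<in> X" "Q \<noteq> Q0" for Q
  proof -
    have Qp: "partition_on N Q" using Q by (simp add: X_def partitions_def)
    have "\<exists>C\<in>Q. \<exists>i\<in>C. C - {i} \<noteq> {}"
    proof (rule ccontr)
      assume "\<not> ?thesis"
      then have "\<forall>C\<in>Q. \<forall>i\<in>C. C - {i} = {}" by blast
      then have "Q = Q0" unfolding Q0_def by (rule singletons_unique[OF Qp])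
      then show False using Q by simp
    qed
    then obtain C i where C: "C \<in> Q" and iC: "i \<in> C" and ne: "C - {i} \<noteq> {}" by blast
    have QX: "Q \<in> partitions N" using Q by (simp add: X_def)
    note R = avg_rel[OF mono U NU QX C iC ne]
    define I where "I = insert {} (Q - {C})"
    define a where "a = (\<lambda>B::'a set. wt B / (real (card N) - real (card (C - {i}))))"
    define y where "y = (\<lambda>B::'a set. f (insert (C - {i}) (add_to (Q - {C}) i B)))"
    have I: "finite I" using R(5) by (simp add: I_def)
    have j: "{} \<in> I" by (simp add: I_def)
    have a0: "\<forall>k\<in>I. a k \<ge> 0" using R(6) by (simp add: a_def wt_def)
    have aj: "a {} > 0" using R(6) by (simp add: a_def wt_def)
    have s1: "(\<Sum>k\<in>I. a k) = 1" using R(3) by (simp add: a_def I_def)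
    have x: "f Q = (\<Sum>k\<in>I. a k * y k)" using R(1) by (simp add: a_def y_def f_def I_def)
    have yX: "\<forall>k\<in>I. insert (C - {i}) (add_to (Q - {C}) i k) \<in> X" using R(2) by (simp add: I_def X_def)
    define Q' where "Q' = insert (C - {i}) (add_to (Q - {C}) i {})"
    have Q'X: "Q' \<in> X" using yX j by (simp add: Q'_def)
    have yj: "y {} = f Q'" by (simp add: y_def Q'_def)
    have mx: "(\<forall>R\<in>X. f R \<le> f Q) \<longrightarrow> f Q' = f Q"
    proof
      assume h: "\<forall>R\<in>X. f R \<le> f Q"
      have "\<forall>k\<in>I. y k \<le> f Q" using h yX by (simp add: y_def)
      then have "y {} = f Q" by (rule avg_ext[OF I j a0 aj s1 x])
      then show "f Q' = f Q" using yj by simp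
    qed
    have mn: "(\<forall>R\<in>X. f R \<ge> f Q) \<longrightarrow> f Q' = f Q"
    proof
      assume h: "\<forall>R\<in>X. f R \<ge> f Q"
      have "\<forall>k\<in>I. y k \<ge> f Q" using h yX by (simp add: y_def)
      then have "y {} = f Q" by (rule avg_ext2[OF I j a0 aj s1 x])
      then show "f Q' = f Q" using yj by simp
    qed
    show ?thesis using Q'X R(4) mx mn by (auto simp: Q'_def)
  qed
  have up: "\<forall>R\<in>X. f R \<le> f Q0"
  proof (rule maxprin[OF X Q0, where \<mu> = card])
    fix Q assume "Q \<in> X" "Q \<noteq> Q0"
    then show "\<exists>Q'\<in>X. card Q < card Q' \<and> ((\<forall>R\<in>X. f R \<le> f Q) \<longrightarrow> f Q' = f Q)"
      using data by blast
  qed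
  have dn: "\<forall>R\<in>X. (\<lambda>R. - f R) R \<le> (\<lambda>R. - f R) Q0"
  proof (rule maxprin[OF X Q0, where \<mu> = card])
    fix Q assume "Q \<in> X" "Q \<noteq> Q0"
    then obtain Q' where "Q' \<in> X" "card Q < card Q'" "(\<forall>R\<in>X. f R \<ge> f Q) \<longrightarrow> f Q' = f Q"
      using data by blast
    then show "\<exists>Q'\<in>X. card Q < card Q' \<and> ((\<forall>R\<in>X. - f R \<le> - f Q) \<longrightarrow> - f Q' = - f Q)"
      by auto
  qed
  define c where "c = f Q0"
  have pc: "p N R = c * ewens N R" if R: "R \<in> X" for R
  proof -
    have "f R = c" using up dn R by (simp add: c_def) (meson antisym neg_le_iff_le)
    moreover have "ewens N R > 0" using R ewens_pos[OF N] by (simp add: X_def partitions_def)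
    ultimately show ?thesis by (simp add: f_def field_simps)
  qed
  have "1 = (\<Sum>R\<in>X. p N R)" using rp NU by (simp add: random_partition_def X_def)
  also have "\<dots> = (\<Sum>R\<in>X. c * ewens N R)" using pc by (rule sum.cong[OF refl])
  also have "\<dots> = c" using ewens_sum[OF N] by (simp add: X_def sum_distrib_left[symmetric])
  finally have c1: "c = 1" by simp
  show "\<forall>P\<in>partitions N. p N P = ewens N P" using pc c1 by (simp add: X_def)
qed

theorem corollary3:
  fixes U :: "'a set" and p :: "'a set \<Rightarrow> 'a set set \<Rightarrow> real"
  assumes "finite U" and "random_partition U p"
  shows "(monotonicity U (p_shapley p) \<longleftrightarrow> same_rp U p ewens)
       \<and> (monotonicity U (p_shapley p) \<longleftrightarrow> same_solution U (p_shapley p) MPW)"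
proof -
  have A: "monotonicity U MPW" by (rule MPW_mono[OF assms(1)])
  have B: "same_solution U (p_shapley p) MPW" if h: "same_rp U p ewens"
    unfolding same_solution_def
  proof (intro allI impI)
    fix N w i assume NU: "N \<subseteq> U" and w: "tux_game N w" and i: "i \<in> N"
    have N: "finite N" using assms(1) NU by (rule rev_finite_subset)
    have "\<forall>Q\<in>partitions N. p N Q = ewens N Q" using h NU by (simp add: same_rp_def)
    then show "p_shapley p N w i = MPW N w i" by (rule pshap_ewens[OF N i w])
  qed
  have C: "monotonicity U (p_shapley p) \<Longrightarrow> same_rp U p ewens"
    by (rule mono_imp_same[OF assms])
  have D: "monotonicity U (p_shapley p)" if h: "same_solution U (p_shapley p) MPW"
    unfolding monotonicity_def
  proof (intro allI impI)
    fix N w z i assume NU: "N \<subseteq> U" and w: "tux_game N w" and z: "tux_game N z" and i: "i \<in> N"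
      and H: "\<forall>(S, P)\<in>emb (N - {i}). \<forall>B\<in>insert {} P.
          z (insert i S) P - z S (add_to P i B) \<le> w (insert i S) P - w S (add_to P i B)"
    have "MPW N z i \<le> MPW N w i" using A NU w z i H unfolding monotonicity_def by blast
    moreover have "p_shapley p N w i = MPW N w i" using h NU w i by (simp add: same_solution_def)
    moreover have "p_shapley p N z i = MPW N z i" using h NU z i by (simp add: same_solution_def)
    ultimately show "p_shapley p N z i \<le> p_shapley p N w i" by simp
  qed
  show ?thesis using B C D by blast
qed

end
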